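(* For any $\alpha\in[0,1]$, the approximation $R_{\alpha}(D)$ and the exact rate-distortion function $R(D)$ satisfy: (i) if $0<D\leq n\lambda_{\min}$, then $$0\leq \frac{R_{\alpha}(D)-R(D)}{n}\leq \frac{1}{2}\log(1+\alpha);$$ (ii) if $n\lambda_{\min}< D\leq {\rm tr}(\bm \Sigma)$, then $$\frac{1}{2}\log(1+\alpha) - \frac{1}{2}\log \frac{\lambda_{{\rm mean}}}{\lambda_{\min}} \leq \frac{R_{\alpha}(D) - R(D)}{n} \leq \frac{1}{2}\log(1+\alpha),$$ where $\lambda_{{\rm mean}}=(\lambda_1+ \ldots +\lambda_n)/n={\rm tr}(\bm \Sigma)/n$.
   Context: Let $\bm X\in\mathbb{R}^n$ be a Gaussian random vector (arbitrary mean) with covariance matrix $\bm\Sigma$ (symmetric, positive semidefinite), having eigenvalues $\lambda_1,\ldots,\lambda_n$, and let $\lambda_{\min}=\min\{\lambda_1,\ldots,\lambda_n\}$. Its rate-distortion function under mean squared error distortion $\mathbb{E}[\|\bm X-\hat{\bm X}\|^2]\le D$ is $$R(D)=\sum_{i=1}^{n}\frac{1}{2}\log\frac{\lambda_i}{D_{i}},\qquad D_i=\min\{L,\lambda_i\},$$ where $L$ is chosen so that $\sum_{i=1}^n D_i=D$ (reverse water-filling); in particular $R(D)=0$ for $D\ge{\rm tr}(\bm\Sigma)$. For $\alpha\in[0,1]$ and $D>0$, define the approximation $$R_\alpha(D)=\frac{1}{2}\log\det \Big(\alpha \bm I+\frac{n}{D}\bm \Sigma\Big).$$ *)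

theory Defs
  imports "HOL-Analysis.Analysis"
begin

definition water_level :: "('n::finite \<Rightarrow> real) \<Rightarrow> real \<Rightarrow> real" where
  "water_level lam D = (SOME L. (\<Sum>i\<in>UNIV. min L (lam i)) = D)"

text \<open>Rate-distortion function of a Gaussian vector with covariance eigenvalues lam
  (natural logarithm), via reverse water-filling; it is 0 for D at least the trace.\<close>
definition gauss_rdf :: "('n::finite \<Rightarrow> real) \<Rightarrow> real \<Rightarrow> real" where
  "gauss_rdf lam D =
     (if D \<ge> (\<Sum>i\<in>UNIV. lam i) then 0
      else (\<Sum>i\<in>UNIV. ln (lam i / min (water_level lam D) (lam i)) / 2))"

definition approx_rdf :: "real \<Rightarrow> real^'n::finite^'n \<Rightarrow> real \<Rightarrow> real" where
  "approx_rdf \<alpha> \<Sigma> D = ln (det (mat \<alpha> + (real CARD('n) / D) *\<^sub>R \<Sigma>)) / 2"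

end

theory Submission
  imports Defs "HOL-Computational_Algebra.Polynomial"
begin

lemma det_scaleR_gen:
  fixes A :: "real^'n::finite^'n"
  shows "det (k *\<^sub>R A) = k ^ CARD('n) * det A"
proof -
  have "det (k *\<^sub>R A) = (\<Sum>p\<in>{p. p permutes (UNIV::'n set)}. of_int (sign p) * (k ^ CARD('n) * (\<Prod>i\<in>UNIV. A$i$p i)))"
    unfolding det_def by (simp add: prod.distrib)
  also have "\<dots> = k ^ CARD('n) * det A"
    unfolding det_def sum_distrib_left by (intro sum.cong) auto
  finally show ?thesis .
qed

lemma det_shift:
  fixes S :: "real^'n::finite^'n" and lam :: "'n \<Rightarrow> real"
  assumes eig: "\<forall>x. det (mat x - S) = (\<Prod>i\<in>UNIV. x - lam i)" and c: "c \<noteq> 0"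
  shows "det (mat a + c *\<^sub>R S) = (\<Prod>i\<in>UNIV. a + c * lam i)"
proof -
  have eq: "mat a + c *\<^sub>R S = (-c) *\<^sub>R (mat (-a/c) - S)"
    using c by (simp add: vec_eq_iff mat_def algebra_simps)
  have "det (mat a + c *\<^sub>R S) = (-c) ^ CARD('n) * det (mat (-a/c) - S)"
    unfolding eq by (rule det_scaleR_gen)
  then have "det (mat a + c *\<^sub>R S) = (-c) ^ CARD('n) * (\<Prod>i\<in>UNIV. -a/c - lam i)"
    by (simp only: eig)
  also have "\<dots> = (\<Prod>i::'n\<in>UNIV. (-c)) * (\<Prod>i\<in>UNIV. -a/c - lam i)"
    by simp
  also have "\<dots> = (\<Prod>i\<in>UNIV. (-c) * (-a/c - lam i))"
    by (rule prod.distrib[symmetric])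
  also have "\<dots> = (\<Prod>i\<in>UNIV. a + c * lam i)"
    using c by (intro prod.cong) (auto simp: field_simps)
  finally show ?thesis .
qed

lemma eig_nonneg:
  fixes S :: "real^'n::finite^'n" and lam :: "'n \<Rightarrow> real"
  assumes eig: "\<forall>x. det (mat x - S) = (\<Prod>i\<in>UNIV. x - lam i)"
    and psd: "\<forall>x. 0 \<le> x \<bullet> (S *v x)"
  shows "0 \<le> lam j"
proof -
  have "(\<Prod>i\<in>UNIV. lam j - lam i) = 0" by (rule prod_zero) auto
  then have "det (mat (lam j) - S) = 0" using eig by simp
  then have "\<not> invertible (mat (lam j) - S)" by (simp add: invertible_det_nz)
  then obtain v where v: "(mat (lam j) - S) *v v = 0" "v \<noteq> 0"
    unfolding invertible_left_inverse matrix_left_invertible_ker by blast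
  have "mat (lam j) *v v = lam j *\<^sub>R v"
    by (simp add: vec_eq_iff matrix_vector_mult_def mat_def if_distrib[of "\<lambda>x. x * _"] cong: if_cong)
  then have "S *v v = lam j *\<^sub>R v" using v
    by (simp add: matrix_vector_mult_diff_rdistrib vec_eq_iff)
  then have "0 \<le> lam j * (v \<bullet> v)" using psd[rule_format, of v] by simp
  moreover have "0 < v \<bullet> v" using v by simp
  ultimately show ?thesis by (simp add: zero_le_mult_iff)
qed

lemma coeff_prod_linear:
  fixes a :: "'a \<Rightarrow> real"
  assumes "finite S"
  shows "coeff (\<Prod>i\<in>S. [:-a i, 1:]) (card S) = 1 \<and>
         (S \<noteq> {} \<longrightarrow> coeff (\<Prod>i\<in>S. [:-a i, 1:]) (card S - 1) = - sum a S)"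
  using assms
proof (induction S rule: finite_induct)
  case empty
  then show ?case by simp
next
  case (insert j S)
  define P where "P = (\<Prod>i\<in>S. [:-a i, 1:])"
  have dP: "degree P \<le> card S"
    unfolding P_def using degree_prod_sum_le[OF insert(1), of "\<lambda>i. [:-a i, 1:]"]
    by (simp add: o_def)
  have c0: "coeff P (Suc (card S)) = 0" using dP by (intro coeff_eq_0) simp
  have eq: "(\<Prod>i\<in>insert j S. [:-a i, 1:]) = smult (-a j) P + pCons 0 P"
    using insert by (simp add: P_def mult_pCons_left)
  have IH1: "coeff P (card S) = 1" using insert(3) P_def by simp
  show ?case
  proof (intro conjI impI)
    show "coeff (\<Prod>i\<in>insert j S. [:-a i, 1:]) (card (insert j S)) = 1"
      using insert(1,2) IH1 c0 by (simp add: eq)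
  next
    show "coeff (\<Prod>i\<in>insert j S. [:-a i, 1:]) (card (insert j S) - 1) = - sum a (insert j S)"
    proof (cases "S = {}")
      case True then show ?thesis by simp
    next
      case False
      then obtain m where m: "card S = Suc m" using insert(1) by (cases "card S") auto
      have IH2: "coeff P m = - sum a S" using insert(3) False m P_def by simp
      show ?thesis using insert(1,2) IH1 IH2 m by (simp add: eq)
    qed
  qed
qed

lemma trace_eig:
  fixes S :: "real^'n::finite^'n" and lam :: "'n \<Rightarrow> real"
  assumes eig: "\<forall>x. det (mat x - S) = (\<Prod>i\<in>UNIV. x - lam i)"
  shows "trace S = sum lam UNIV"
proof -
  define f where "f p i = (if p i = i then [:-S$i$i, 1:] else [:-S$i$(p i):])" for p :: "'n \<Rightarrow> 'n" and i
  define P where "P = (\<Sum>p\<in>{p. p permutes (UNIV::'n set)}. smult (of_int (sign p)) (\<Prod>i\<in>UNIV. f p i))"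
  define Q where "Q = (\<Prod>i\<in>UNIV. [:-lam i, 1:])"
  have "poly P x = poly Q x" for x
  proof -
    have "poly P x = det (mat x - S)"
      unfolding P_def det_def poly_sum
      by (intro sum.cong refl) (auto simp: poly_prod f_def mat_def intro!: prod.cong)
    also have "\<dots> = poly Q x" unfolding Q_def using eig by (simp add: poly_prod)
    finally show ?thesis .
  qed
  then have PQ: "P = Q" using poly_eq_poly_eq_iff by blast
  have n1: "CARD('n) \<ge> 1" by (simp add: Suc_leI)
  have cQ: "coeff Q (CARD('n) - 1) = - sum lam UNIV"
    using coeff_prod_linear[of UNIV lam] unfolding Q_def by simp
  have z: "coeff (\<Prod>i\<in>UNIV. f p i) (CARD('n) - 1) = 0"
    if p: "p permutes UNIV" "p \<noteq> id" for p
  proof -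
    obtain i where i: "p i \<noteq> i" using p(2) by (auto simp: fun_eq_iff)
    have ii: "p (p i) \<noteq> p i" using i permutes_inj[OF p(1)] by (metis injD)
    have sub: "{k. p k = k} \<subseteq> UNIV - {i, p i}" using i ii by auto
    have "card {k. p k = k} \<le> card (UNIV - {i, p i})" by (rule card_mono[OF _ sub]) simp
    also have "\<dots> = CARD('n) - 2" using i by (simp add: card_Diff_subset)
    finally have cfix: "card {k. p k = k} \<le> CARD('n) - 2" .
    have "2 \<le> CARD('n)" using i by (metis card_2_iff card_mono finite subset_UNIV)
    have "degree (\<Prod>i\<in>UNIV. f p i) \<le> sum (degree \<circ> f p) UNIV"
      by (rule degree_prod_sum_le) simp
    also have "\<dots> = (\<Sum>k\<in>UNIV. if p k = k then 1 else 0)"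
      by (intro sum.cong) (auto simp: f_def)
    also have "\<dots> = card {k. p k = k}"
      by (simp add: sum.If_cases)
    finally show ?thesis using cfix \<open>2 \<le> CARD('n)\<close> by (intro coeff_eq_0) linarith
  qed
  have "coeff P (CARD('n) - 1) = coeff (\<Prod>i\<in>UNIV. f id i) (CARD('n) - 1)"
  proof -
    have "coeff P (CARD('n) - 1) = (\<Sum>p\<in>{p. p permutes (UNIV::'n set)}. of_int (sign p) * coeff (\<Prod>i\<in>UNIV. f p i) (CARD('n) - 1))"
      unfolding P_def coeff_sum by simp
    also have "\<dots> = of_int (sign (id::'n\<Rightarrow>'n)) * coeff (\<Prod>i\<in>UNIV. f id i) (CARD('n) - 1)"
      using z by (subst sum.remove[of _ id]) (auto simp: permutes_id intro!: sum.neutral)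
    finally show ?thesis by (simp add: sign_id)
  qed
  also have "\<dots> = - trace S"
    using coeff_prod_linear[of UNIV "\<lambda>i. S$i$i"] by (simp add: f_def trace_def)
  finally show ?thesis using PQ cQ by simp
qed

lemma ln_tangent: "0 < (x::real) \<Longrightarrow> 0 < M \<Longrightarrow> ln x \<le> ln M + x / M - 1"
  using ln_le_minus_one[of "x / M"] by (simp add: ln_div)

lemma am_gm_ln:
  fixes x :: "'n::finite \<Rightarrow> real"
  assumes pos: "\<And>i. 0 < x i"
  shows "(\<Sum>i\<in>UNIV. ln (x i)) \<le> real CARD('n) * ln (sum x UNIV / real CARD('n))"
proof -
  define M where "M = sum x UNIV / real CARD('n)"
  have "sum x UNIV > 0" using pos by (intro sum_pos) auto
  then have M: "M > 0" unfolding M_def by simp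
  have "(\<Sum>i\<in>UNIV. ln (x i)) \<le> (\<Sum>i\<in>UNIV. ln M + x i / M - 1)"
    by (intro sum_mono ln_tangent pos M)
  also have "\<dots> = real CARD('n) * ln M + sum x UNIV / M - real CARD('n)"
    by (simp add: sum.distrib sum_subtractf sum_divide_distrib)
  also have "sum x UNIV / M = real CARD('n)" using M \<open>sum x UNIV > 0\<close> unfolding M_def by simp
  finally show ?thesis unfolding M_def by simp
qed

lemma wconc:
  fixes u v a :: real
  assumes "0 < u" "0 < v" "0 \<le> a"
  shows "ln (1 + a) + (a * ln u + ln v) / (1 + a) \<le> ln (a * u + v)"
proof -
  define M where "M = (a * u + v) / (1 + a)"
  have p: "0 < a * u + v" using assms by (simp add: add_nonneg_pos)
  then have M: "M > 0" unfolding M_def using assms by simp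
  have "a * ln u \<le> a * (ln M + u / M - 1)"
    using ln_tangent[OF assms(1) M] assms(3) by (rule mult_left_mono)
  moreover have "ln v \<le> ln M + v / M - 1" by (rule ln_tangent[OF assms(2) M])
  ultimately have "a * ln u + ln v \<le> (1 + a) * ln M + (a * u + v) / M - (1 + a)"
    by (simp add: algebra_simps add_divide_distrib)
  also have "(a * u + v) / M = 1 + a" using M p assms unfolding M_def by simp
  also have "ln M = ln (a * u + v) - ln (1 + a)" unfolding M_def using p assms by (simp add: ln_div)
  finally have "a * ln u + ln v \<le> (1 + a) * (ln (a * u + v) - ln (1 + a))" by simp
  then show ?thesis using assms(3) by (simp add: field_simps)
qed

lemma upper:
  fixes lam Dd :: "'n::finite \<Rightarrow> real"
  assumes lam0: "\<And>i. 0 \<le> lam i" and a0: "0 \<le> \<alpha>" and Dp: "0 < D"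
    and Dd0: "\<And>i. 0 \<le> Dd i" and Ddle: "\<And>i. Dd i \<le> lam i"
    and Dz: "\<And>i. Dd i = 0 \<Longrightarrow> lam i = 0" and sumD: "sum Dd UNIV = D"
  shows "ln (\<Prod>i\<in>UNIV. \<alpha> + real CARD('n) / D * lam i) / 2
          - (\<Sum>i\<in>UNIV. ln (lam i / Dd i) / 2) \<le> real CARD('n) * ln (1 + \<alpha>) / 2"
proof -
  let ?n = "real CARD('n)"
  define a where "a i = \<alpha> + ?n / D * lam i" for i
  have a0': "0 \<le> a i" for i unfolding a_def using a0 lam0[of i] Dp by simp
  have R0: "0 \<le> ln (lam i / Dd i)" for i
  proof (cases "Dd i = 0")
    case True then show ?thesis by simp
  next
    case False then have "Dd i > 0" using Dd0[of i] by simp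
    then show ?thesis using Ddle[of i] by simp
  qed
  have Rnn: "0 \<le> (\<Sum>i\<in>UNIV. ln (lam i / Dd i) / 2)" using R0 by (intro sum_nonneg) simp
  have l0: "0 \<le> ln (1 + \<alpha>)" using a0 by simp
  show ?thesis
  proof (cases "\<exists>i. a i = 0")
    case True
    then obtain j where "a j = 0" by blast
    then have "(\<Prod>i\<in>UNIV. a i) = 0" by (intro prod_zero) auto
    then have "ln (\<Prod>i\<in>UNIV. a i) = 0" by (simp del: prod_zero_iff)
    moreover have "0 \<le> real CARD('n) * ln (1 + \<alpha>)" using l0 by simp
    ultimately show ?thesis using Rnn unfolding a_def by linarith
  next
    case False
    then have apos: "0 < a i" for i using a0'[of i] by (metis order_le_less)
    define x where "x i = \<alpha> + ?n * Dd i / D" for i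
    have xpos: "0 < x i" for i
    proof (cases "lam i = 0")
      case True then have "Dd i = 0" using Dd0[of i] Ddle[of i] by simp
      then show ?thesis using apos[of i] True unfolding x_def a_def by simp
    next
      case False then have "Dd i > 0" using Dd0[of i] Dz[of i] by force
      then show ?thesis unfolding x_def using a0 Dp by (simp add: add_nonneg_pos)
    qed
    have trm: "ln (a i) - ln (lam i / Dd i) \<le> ln (x i)" for i
    proof (cases "lam i = 0")
      case True then have "Dd i = 0" using Dd0[of i] Ddle[of i] by simp
      then show ?thesis using True unfolding x_def a_def by simp
    next
      case False
      then have lp: "lam i > 0" using lam0[of i] by simp
      have dp: "Dd i > 0" using Dd0[of i] Dz[of i] False by force
      have e1: "ln (a i) - ln (lam i / Dd i) = ln (a i * Dd i / lam i)"
        using lp dp apos[of i] by (simp add: ln_div ln_mult)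
      have e2: "a i * Dd i / lam i = \<alpha> * (Dd i / lam i) + ?n * Dd i / D"
        unfolding a_def using lp by (simp add: field_simps)
      have e3: "\<alpha> * (Dd i / lam i) + ?n * Dd i / D \<le> x i"
      proof -
        have "Dd i / lam i \<le> 1" using lp Ddle[of i] by simp
        then have "\<alpha> * (Dd i / lam i) \<le> \<alpha>" using a0 by (rule mult_left_le)
        then show ?thesis unfolding x_def by simp
      qed
      have "0 < a i * Dd i / lam i" using lp dp apos[of i] by simp
      moreover have "a i * Dd i / lam i \<le> x i" using e2 e3 by simp
      ultimately have "ln (a i * Dd i / lam i) \<le> ln (x i)" by (metis ln_mono)
      then show ?thesis using e1 by simp
    qed
    have "ln (\<Prod>i\<in>UNIV. a i) = (\<Sum>i\<in>UNIV. ln (a i))"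
      using apos by (intro ln_prod) (auto, metis less_irrefl)
    then have "ln (\<Prod>i\<in>UNIV. a i) / 2 - (\<Sum>i\<in>UNIV. ln (lam i / Dd i) / 2)
          = (\<Sum>i\<in>UNIV. ln (a i) - ln (lam i / Dd i)) / 2"
      by (simp add: sum_subtractf sum_divide_distrib[symmetric])
    also have "\<dots> \<le> (\<Sum>i\<in>UNIV. ln (x i)) / 2"
      using trm by (intro divide_right_mono sum_mono) auto
    also have "(\<Sum>i\<in>UNIV. ln (x i)) \<le> ?n * ln (sum x UNIV / ?n)"
      by (rule am_gm_ln[OF xpos])
    also have "sum x UNIV / ?n = 1 + \<alpha>"
    proof -
      have "sum x UNIV = (\<Sum>i::'n\<in>UNIV. \<alpha>) + (\<Sum>i\<in>UNIV. ?n * Dd i / D)"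
        unfolding x_def by (rule sum.distrib)
      also have "(\<Sum>i\<in>UNIV. ?n * Dd i / D) = ?n * sum Dd UNIV / D"
        by (simp add: sum_distrib_left sum_divide_distrib)
      finally have "sum x UNIV = ?n * \<alpha> + ?n" using sumD Dp by simp
      then show ?thesis by (simp add: field_simps)
    qed
    finally show ?thesis unfolding a_def by simp
  qed
qed

lemma lower:
  fixes lam Dd :: "'n::finite \<Rightarrow> real"
  assumes a0: "0 \<le> \<alpha>" and mp: "0 < m"
    and Ddm: "\<And>i. m \<le> Dd i" and Ddle: "\<And>i. Dd i \<le> lam i"
    and sumD: "sum Dd UNIV = D" and DT: "D \<le> sum lam UNIV"
  shows "real CARD('n) * ln (1 + \<alpha>) / 2 - real CARD('n) * ln ((sum lam UNIV / real CARD('n)) / m) / 2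
     \<le> ln (\<Prod>i\<in>UNIV. \<alpha> + real CARD('n) / D * lam i) / 2
          - (\<Sum>i\<in>UNIV. ln (lam i / Dd i) / 2)"
proof -
  let ?n = "real CARD('n)"
  let ?T = "sum lam UNIV"
  define l where "l = ln ((?T / ?n) / m)"
  have dp: "0 < Dd i" for i using mp Ddm[of i] by linarith
  have lp: "0 < lam i" for i using dp[of i] Ddle[of i] by linarith
  have "?n * m \<le> D" using sumD Ddm sum_mono[of UNIV "\<lambda>_. m" Dd] by simp
  then have Dp: "0 < D" using mp by (smt (verit) mult_pos_pos of_nat_0_less_iff zero_less_card_finite)
  have Tp: "0 < ?T" using DT Dp by simp
  define a where "a i = \<alpha> + ?n / D * lam i" for i
  have apos: "0 < a i" for i unfolding a_def using a0 lp[of i] Dp by (simp add: add_nonneg_pos)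
  define u where "u i = Dd i / lam i" for i
  define v where "v i = ?n * Dd i / D" for i
  have up: "0 < u i" for i unfolding u_def using dp lp by simp
  have vp: "0 < v i" for i unfolding v_def using dp Dp by simp
  have trm: "ln (1 + \<alpha>) + (\<alpha> * ln (u i) + ln (v i)) / (1 + \<alpha>) \<le> ln (a i) - ln (lam i / Dd i)" for i
  proof -
    have "ln (a i) - ln (lam i / Dd i) = ln (a i * Dd i / lam i)"
      using lp[of i] dp[of i] apos[of i] by (simp add: ln_div ln_mult)
    also have "a i * Dd i / lam i = \<alpha> * u i + v i"
      unfolding a_def u_def v_def using lp[of i] by (simp add: field_simps)
    finally show ?thesis using wconc[OF up vp a0] by simp
  qed
  have su: "- (?n * l) \<le> (\<Sum>i\<in>UNIV. ln (u i))"
  proof -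
    have A: "(\<Sum>i\<in>UNIV. ln (lam i / Dd i)) \<le> ?n * ln ((\<Sum>i\<in>UNIV. lam i / Dd i) / ?n)"
      using lp dp by (intro am_gm_ln) simp
    have B: "(\<Sum>i\<in>UNIV. lam i / Dd i) \<le> (\<Sum>i\<in>UNIV. lam i / m)"
      using lp dp mp Ddm by (intro sum_mono divide_left_mono) (auto simp: less_imp_le)
    have C: "ln ((\<Sum>i\<in>UNIV. lam i / Dd i) / ?n) \<le> ln ((\<Sum>i\<in>UNIV. lam i / m) / ?n)"
    proof -
      have "0 < (\<Sum>i\<in>UNIV. lam i / Dd i)" by (rule sum_pos) (use lp dp in auto)
      then have "0 < (\<Sum>i\<in>UNIV. lam i / Dd i) / ?n" by simp
      moreover have "(\<Sum>i\<in>UNIV. lam i / Dd i) / ?n \<le> (\<Sum>i\<in>UNIV. lam i / m) / ?n"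
        using B by (rule divide_right_mono) simp
      ultimately show ?thesis by (metis ln_mono)
    qed
    have E: "(\<Sum>i\<in>UNIV. lam i / m) / ?n = (?T / ?n) / m"
      by (simp add: sum_divide_distrib[symmetric])
    have "?n * ln ((\<Sum>i\<in>UNIV. lam i / Dd i) / ?n) \<le> ?n * l"
      unfolding l_def by (rule mult_left_mono[OF C[unfolded E]]) simp
    with A have "(\<Sum>i\<in>UNIV. ln (lam i / Dd i)) \<le> ?n * l" by linarith
    moreover have "ln (u i) = - ln (lam i / Dd i)" for i
      unfolding u_def using lp[of i] dp[of i] by (simp add: ln_div)
    ultimately show ?thesis by (simp add: sum_negf)
  qed
  have sv: "- (?n * l) \<le> (\<Sum>i\<in>UNIV. ln (v i))"
  proof -
    have vl: "- l \<le> ln (v i)" for i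
    proof -
      have "- l = ln (m / (?T / ?n))" unfolding l_def using mp Tp by (simp add: ln_div)
      also have "m / (?T / ?n) \<le> v i"
      proof -
        have "m / (?T / ?n) = ?n * m / ?T" by simp
        also have "\<dots> \<le> ?n * m / D" by (rule divide_left_mono[OF DT]) (use mp Dp Tp in auto)
        also have "\<dots> \<le> ?n * Dd i / D" by (rule divide_right_mono[OF mult_left_mono[OF Ddm[of i]]]) (use Dp in auto)
        finally show ?thesis unfolding v_def .
      qed
      then have "ln (m / (?T / ?n)) \<le> ln (v i)" by (rule ln_mono) (use mp Tp in simp)
      finally show ?thesis .
    qed
    have "(\<Sum>i::'n\<in>UNIV. - l) \<le> (\<Sum>i\<in>UNIV. ln (v i))" by (intro sum_mono) (rule vl)
    then show ?thesis by simp
  qed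
  have "ln (\<Prod>i\<in>UNIV. a i) = (\<Sum>i\<in>UNIV. ln (a i))"
    using apos by (intro ln_prod) (auto, metis less_irrefl)
  then have eq: "ln (\<Prod>i\<in>UNIV. a i) / 2 - (\<Sum>i\<in>UNIV. ln (lam i / Dd i) / 2)
        = (\<Sum>i\<in>UNIV. ln (a i) - ln (lam i / Dd i)) / 2"
    by (simp add: sum_subtractf sum_divide_distrib[symmetric])
  have "(\<Sum>i\<in>UNIV. ln (1 + \<alpha>) + (\<alpha> * ln (u i) + ln (v i)) / (1 + \<alpha>))
       \<le> (\<Sum>i\<in>UNIV. ln (a i) - ln (lam i / Dd i))"
    using trm by (intro sum_mono) auto
  moreover have "(\<Sum>i\<in>UNIV. ln (1 + \<alpha>) + (\<alpha> * ln (u i) + ln (v i)) / (1 + \<alpha>))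
      = ?n * ln (1 + \<alpha>) + (\<alpha> * (\<Sum>i\<in>UNIV. ln (u i)) + (\<Sum>i\<in>UNIV. ln (v i))) / (1 + \<alpha>)"
    by (simp add: sum.distrib sum_divide_distrib[symmetric] sum_distrib_left)
  moreover have "?n * ln (1 + \<alpha>) - ?n * l \<le>
      ?n * ln (1 + \<alpha>) + (\<alpha> * (\<Sum>i\<in>UNIV. ln (u i)) + (\<Sum>i\<in>UNIV. ln (v i))) / (1 + \<alpha>)"
  proof -
    have "\<alpha> * (- (?n * l)) \<le> \<alpha> * (\<Sum>i\<in>UNIV. ln (u i))" using su a0 by (rule mult_left_mono)
    then have "(1 + \<alpha>) * (- (?n * l)) \<le> \<alpha> * (\<Sum>i\<in>UNIV. ln (u i)) + (\<Sum>i\<in>UNIV. ln (v i))"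
      using sv by (simp add: algebra_simps)
    then have "- (?n * l) \<le> (\<alpha> * (\<Sum>i\<in>UNIV. ln (u i)) + (\<Sum>i\<in>UNIV. ln (v i))) / (1 + \<alpha>)"
      using a0 by (simp add: field_simps)
    then show ?thesis by simp
  qed
  ultimately show ?thesis using eq unfolding a_def l_def by linarith
qed

lemma wl:
  fixes lam :: "'n::finite \<Rightarrow> real"
  assumes lam0: "\<And>i. 0 \<le> lam i" and Dp: "0 < D" and DT: "D < sum lam UNIV"
  shows "(\<Sum>i\<in>UNIV. min (water_level lam D) (lam i)) = D \<and> 0 < water_level lam D"
proof -
  let ?f = "\<lambda>L. \<Sum>i\<in>UNIV. min L (lam i)"
  let ?M = "Max (range lam)"
  have f0: "?f 0 = 0" using lam0 by (simp add: min_absorb1)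
  have fM: "?f ?M = sum lam UNIV" by (intro sum.cong) (auto simp: min_absorb2)
  have M0: "0 \<le> ?M" by (rule order_trans[OF lam0 Max_ge]) auto
  have "continuous_on {0..?M} ?f" by (intro continuous_intros)
  then have "\<exists>L. 0 \<le> L \<and> L \<le> ?M \<and> ?f L = D"
    using f0 fM Dp DT M0 by (intro IVT') auto
  then have ex: "\<exists>L. ?f L = D" by blast
  have eq: "?f (water_level lam D) = D"
    unfolding water_level_def using someI_ex[OF ex] .
  moreover have "0 < water_level lam D"
  proof (rule ccontr)
    assume "\<not> ?thesis"
    then have "?f (water_level lam D) \<le> ?f 0" by (intro sum_mono) auto
    then show False using eq f0 Dp by simp
  qed
  ultimately show ?thesis by blast
qed

theorem theorem1:
  fixes \<Sigma> :: "real^'n^'n" and lam :: "'n \<Rightarrow> real" and \<alpha> D :: real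
  assumes sym: "transpose \<Sigma> = \<Sigma>"
    and psd: "\<forall>x. 0 \<le> x \<bullet> (\<Sigma> *v x)"
    and eig: "\<forall>x. det (mat x - \<Sigma>) = (\<Prod>i\<in>UNIV. x - lam i)"
    and alpha: "0 \<le> \<alpha>" "\<alpha> \<le> 1"
    and Dpos: "0 < D"
  shows
    "(D \<le> real CARD('n) * Min (range lam) \<longrightarrow>
        0 \<le> (approx_rdf \<alpha> \<Sigma> D - gauss_rdf lam D) / real CARD('n) \<and>
        (approx_rdf \<alpha> \<Sigma> D - gauss_rdf lam D) / real CARD('n) \<le> ln (1 + \<alpha>) / 2)
     \<and>
     (real CARD('n) * Min (range lam) < D \<and> D \<le> trace \<Sigma> \<longrightarrow>
        (0 < Min (range lam) \<longrightarrow>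
          ln (1 + \<alpha>) / 2
            - ln (((\<Sum>i\<in>UNIV. lam i) / real CARD('n)) / Min (range lam)) / 2
          \<le> (approx_rdf \<alpha> \<Sigma> D - gauss_rdf lam D) / real CARD('n)) \<and>
        (approx_rdf \<alpha> \<Sigma> D - gauss_rdf lam D) / real CARD('n) \<le> ln (1 + \<alpha>) / 2)"
proof -
  let ?n = "real CARD('n)"
  let ?m = "Min (range lam)"
  let ?T = "\<Sum>i\<in>UNIV. lam i"
  let ?L = "water_level lam D"
  let ?A = "ln (\<Prod>i\<in>UNIV. \<alpha> + ?n / D * lam i) / 2"
  have np: "0 < ?n" by simp
  have lam0: "\<And>i. 0 \<le> lam i" using eig_nonneg[OF eig psd] .
  have tr: "trace \<Sigma> = ?T" using trace_eig[OF eig] .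
  have mle: "\<And>i. ?m \<le> lam i" by simp
  have min_in: "?m \<in> range lam" by (intro Min_in) auto
  have eqA: "approx_rdf \<alpha> \<Sigma> D = ?A"
    unfolding approx_rdf_def using det_shift[OF eig, of "?n / D" \<alpha>] Dpos by simp
  have GT: "gauss_rdf lam D = (\<Sum>i\<in>UNIV. ln (lam i / lam i) / 2)" if "?T \<le> D"
  proof -
    have "(\<Sum>i\<in>UNIV. ln (lam i / lam i) / 2) = 0"
      by (intro sum.neutral) (auto simp: divide_self_if)
    then show ?thesis unfolding gauss_rdf_def using that by simp
  qed
  have GL: "gauss_rdf lam D = (\<Sum>i\<in>UNIV. ln (lam i / min ?L (lam i)) / 2)
      \<and> (\<Sum>i\<in>UNIV. min ?L (lam i)) = D \<and> 0 < ?L" if "D < ?T"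
    using that wl[OF lam0 Dpos that] unfolding gauss_rdf_def by simp
  have UP: "approx_rdf \<alpha> \<Sigma> D - gauss_rdf lam D \<le> ?n * ln (1 + \<alpha>) / 2" if DT: "D \<le> ?T"
  proof (cases "?T \<le> D")
    case True
    then have "D = ?T" using DT by simp
    then show ?thesis unfolding eqA GT[OF True]
      by (intro upper[OF lam0 alpha(1) Dpos]) (auto simp: lam0)
  next
    case False
    then have "D < ?T" by simp
    note G = GL[OF this]
    show ?thesis unfolding eqA G[THEN conjunct1]
      using G lam0 by (intro upper[OF lam0 alpha(1) Dpos]) (auto simp: min_def split: if_splits)
  qed
  have UPn: "(approx_rdf \<alpha> \<Sigma> D - gauss_rdf lam D) / ?n \<le> ln (1 + \<alpha>) / 2" if "D \<le> ?T"
    using UP[OF that] np by (simp add: divide_le_eq mult.commute)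
  have part1: "0 \<le> approx_rdf \<alpha> \<Sigma> D - gauss_rdf lam D" if D1: "D \<le> ?n * ?m"
  proof -
    obtain m where mdef: "m = ?m" by blast
    have D1': "D \<le> ?n * m" unfolding mdef by (rule D1)
    have mle': "m \<le> lam i" for i unfolding mdef by (rule mle)
    have "0 < ?n * m" using D1' Dpos by linarith
    then have mp: "0 < m" using np by (simp add: zero_less_mult_iff)
    have Dm: "D / ?n \<le> m" using D1' np by (simp add: divide_le_eq mult.commute)
    have a1: "1 \<le> \<alpha> + ?n / D * lam i" for i
    proof -
      have "1 \<le> ?n / D * m" using D1' Dpos by (simp add: field_simps)
      also have "\<dots> \<le> ?n / D * lam i" using Dpos by (intro mult_left_mono mle') auto
      finally show ?thesis using alpha by simp
    qed
    show ?thesis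
    proof (cases "?T \<le> D")
      case True
      have "1 \<le> (\<Prod>i\<in>UNIV. \<alpha> + ?n / D * lam i)" by (intro prod_ge_1) (use a1 in auto)
      then have "0 \<le> ?A" by simp
      moreover have "(\<Sum>i\<in>UNIV. ln (lam i / lam i) / 2) = 0"
        by (intro sum.neutral) (auto simp: divide_self_if)
      ultimately show ?thesis unfolding eqA GT[OF True] by simp
    next
      case False
      then have DT: "D < ?T" by simp
      note G = GL[OF DT]
      have Lm: "?L \<le> m"
      proof (rule ccontr)
        assume "\<not> ?L \<le> m"
        then have Lg: "m < ?L" by (simp only: not_le)
        have "\<exists>j. m < lam j"
        proof (rule ccontr)
          assume "\<not> (\<exists>j. m < lam j)"
          then have nj: "\<not> m < lam j" for j by blast
          have lj: "lam j = m" for j using mle'[of j] nj[of j] by linarith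
          then have "?T = ?n * m" by simp
          moreover have "(\<Sum>i\<in>UNIV. min ?L (lam i)) = ?n * m"
            using lj Lg by (simp add: min_absorb2 less_imp_le)
          ultimately show False using G DT by simp
        qed
        then obtain j where j: "m < lam j" by blast
        have "(\<Sum>i::'n\<in>UNIV. m) < (\<Sum>i\<in>UNIV. min ?L (lam i))"
          by (rule sum_strict_mono_ex1) (use Lg j mle' in auto)
        then show False using G D1' by simp
      qed
      then have Dd: "min ?L (lam i) = ?L" for i using mle'[of i] by simp
      then have "?n * ?L = D" using G by simp
      then have LD: "?L = D / ?n" using np by (simp add: field_simps)
      have apos: "0 < \<alpha> + ?n / D * lam i" for i using a1[of i] by simp
      have lp: "0 < lam i" for i using mp mle'[of i] by simp
      have "?A = (\<Sum>i\<in>UNIV. ln (\<alpha> + ?n / D * lam i)) / 2"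
        using apos by (subst ln_prod) (auto, metis less_irrefl)
      moreover have "ln (lam i / (D / ?n)) \<le> ln (\<alpha> + ?n / D * lam i)" for i
      proof -
        have "lam i / (D / ?n) = ?n / D * lam i" by simp
        then have "lam i / (D / ?n) \<le> \<alpha> + ?n / D * lam i" using alpha by linarith
        moreover have "0 < lam i / (D / ?n)" using lp[of i] Dpos by simp
        ultimately show ?thesis by (metis ln_mono)
      qed
      then have "(\<Sum>i\<in>UNIV. ln (lam i / (D / ?n))) \<le> (\<Sum>i\<in>UNIV. ln (\<alpha> + ?n / D * lam i))"
        by (intro sum_mono)
      ultimately show ?thesis unfolding eqA G[THEN conjunct1] Dd unfolding LD
        by (simp add: sum_divide_distrib[symmetric])
    qed
  qed
  have part2: "?n * ln (1 + \<alpha>) / 2 - ?n * ln ((?T / ?n) / ?m) / 2 \<le> approx_rdf \<alpha> \<Sigma> D - gauss_rdf lam D"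
    if D2: "?n * ?m < D" "D \<le> ?T" and mp: "0 < ?m"
  proof (cases "?T \<le> D")
    case True
    then show ?thesis unfolding eqA GT[OF True]
      by (intro lower[OF alpha(1) mp]) (use D2 in auto)
  next
    case False
    then have DT: "D < ?T" by simp
    note G = GL[OF DT]
    have mL: "?m \<le> ?L"
    proof (rule ccontr)
      assume "\<not> ?m \<le> ?L"
      then have Llt: "?L < ?m" by (simp only: not_le)
      have "min ?L (lam i) = ?L" for i by (rule min_absorb1) (use mle[of i] Llt in linarith)
      then have "?n * ?L = D" using G by simp
      then show False using D2(1) mult_strict_left_mono[OF Llt np] by linarith
    qed
    show ?thesis unfolding eqA G[THEN conjunct1]
      by (intro lower[OF alpha(1) mp]) (use G D2 mL mle in auto)
  qed
  show ?thesis
  proof (intro conjI impI)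
    assume D1: "D \<le> ?n * ?m"
    have "?n * ?m \<le> ?T" using sum_mono[of UNIV "\<lambda>_. ?m" lam] mle by simp
    then have "D \<le> ?T" using D1 by simp
    then show "(approx_rdf \<alpha> \<Sigma> D - gauss_rdf lam D) / ?n \<le> ln (1 + \<alpha>) / 2" by (rule UPn)
    show "0 \<le> (approx_rdf \<alpha> \<Sigma> D - gauss_rdf lam D) / ?n" using part1[OF D1] by simp
  next
    assume "?n * ?m < D \<and> D \<le> trace \<Sigma>"
    then have D2: "?n * ?m < D" "D \<le> ?T" using tr by auto
    then show "(approx_rdf \<alpha> \<Sigma> D - gauss_rdf lam D) / ?n \<le> ln (1 + \<alpha>) / 2" by (intro UPn)
    assume mp: "0 < ?m"
    have "?n * (ln (1 + \<alpha>) / 2 - ln ((?T / ?n) / ?m) / 2) \<le> approx_rdf \<alpha> \<Sigma> D - gauss_rdf lam D"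
      using part2[OF D2 mp] by (simp add: algebra_simps)
    then show "ln (1 + \<alpha>) / 2 - ln ((?T / ?n) / ?m) / 2 \<le> (approx_rdf \<alpha> \<Sigma> D - gauss_rdf lam D) / ?n"
      using np by (simp add: le_divide_eq mult.commute)
  qed
qed

end
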